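(* Let $\lambda\in\mathbb R$ (including $\lambda=0$) and $\alpha,\beta\in\mathbb R$ with $\tau\bar\tau=\alpha^2-\lambda\beta^2\neq0$. Let $\mathbf p=(p^0,p^1,p^2),\mathbf q=(q^0,q^1,q^2)\in\mathbb R^3$ with $p_a=\eta_{ab}p^b$, $q_a=\eta_{ab}q^b$, $\mathbf p^2=\eta_{ab}p^ap^b$, $\mathbf q^2=\eta_{ab}q^aq^b$, $\mathbf p\cdot\mathbf q=\eta_{ab}p^aq^b$. If $$\mathbf p^2+\lambda\,\mathbf q^2=-\mu,\qquad 2\,\mathbf p\cdot\mathbf q=-\nu,$$ then $$r=K_\tau+\epsilon^{abc}\Big(p_a\,(P_b\otimes J_c+J_b\otimes P_c)+q_a\,(P_b\otimes P_c+\lambda\,J_b\otimes J_c)\Big)$$ satisfies the classical Yang–Baxter equation $[[r,r]]=0$ in $\mathfrak g_\lambda$, i.e. it is a compatible $r$-matrix.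
   Context: Let $\mathfrak g$ denote either $so(3)$ or $so(2,1)$, with basis $J_0,J_1,J_2$ and metric $\eta=\mathrm{diag}(1,1,1)$ (for $so(3)$) or $\eta=\mathrm{diag}(1,-1,-1)$ (for $so(2,1)$); indices are raised and lowered with $\eta$, summation over repeated indices is implied, $\epsilon_{abc}$ is totally antisymmetric with $\epsilon_{012}=\epsilon^{012}=1$. For $\lambda\in\mathbb R$, $\mathfrak g_\lambda$ is the real six-dimensional Lie algebra with basis $J_a,P_a$ ($a=0,1,2$) and brackets $[J_a,J_b]=\epsilon_{abc}J^c$, $[J_a,P_b]=\epsilon_{abc}P^c$, $[P_a,P_b]=\lambda\epsilon_{abc}J^c$. For real $\alpha,\beta$ with $\tau\bar\tau:=\alpha^2-\lambda\beta^2\neq0$ set $K_\tau=\frac{\alpha}{\tau\bar\tau}(J_a\otimes P^a+P_a\otimes J^a)-\frac{\beta}{\tau\bar\tau}(\lambda J_a\otimes J^a+P_a\otimes P^a)$, $\mu=\frac{\alpha^2+\lambda\beta^2}{(\tau\bar\tau)^2}$, $\nu=-\frac{2\alpha\beta}{(\tau\bar\tau)^2}$. For $r=\sum_i x_i\otimes y_i\in\mathfrak g_\lambda\otimes\mathfrak g_\lambda$ put $r_{12}=\sum_i x_i\otimes y_i\otimes1$, $r_{13}=\sum_i x_i\otimes1\otimes y_i$, $r_{23}=\sum_i1\otimes x_i\otimes y_i$ and $[[r,r]]=[r_{12},r_{13}]+[r_{12},r_{23}]+[r_{13},r_{23}]$. A compatible $r$-matrix is an $r=r'+K_\tau$ with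 $r'$ antisymmetric and $[[r,r]]=0$. *)

theory Defs
  imports Complex_Main "HOL-Library.Function_Algebras"
begin

text \<open>
Basis indices: 0,1,2 stand for J_0,J_1,J_2 and 3,4,5 for P_0,P_1,P_2.
An element of g_lambda is a coefficient function nat => real (support in 0..5),
an element of g_lambda (x) g_lambda is a coefficient function nat => nat => real
(r i j = coefficient of e_i (x) e_j), a triple tensor is nat => nat => nat => real.
The metric is eta = diag(1,s,s) with s = 1 (so(3)) or s = -1 (so(2,1)).
Since eta is diagonal with entries +-1, the inverse metric eta^{ab} equals eta_{ab}.
\<close>

definition eta :: "real \<Rightarrow> nat \<Rightarrow> real" where
  "eta s a = (if a = 0 then 1 else s)"

text \<open>Levi-Civita symbol, epsilon_012 = epsilon^012 = 1 (same numerical values up/down).\<close>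
definition eps :: "nat \<Rightarrow> nat \<Rightarrow> nat \<Rightarrow> real" where
  "eps a b c =
    (if (a,b,c) \<in> {(0,1,2),(1,2,0),(2,0,1)} then 1
     else if (a,b,c) \<in> {(0,2,1),(2,1,0),(1,0,2)} then -1 else 0)"

definition Jv :: "nat \<Rightarrow> nat \<Rightarrow> real" where "Jv a = (\<lambda>m. if m = a then 1 else 0)"
definition Pv :: "nat \<Rightarrow> nat \<Rightarrow> real" where "Pv a = (\<lambda>m. if m = a + 3 then 1 else 0)"
definition Jup :: "real \<Rightarrow> nat \<Rightarrow> nat \<Rightarrow> real" where "Jup s a = (\<lambda>m. eta s a * Jv a m)"
definition Pup :: "real \<Rightarrow> nat \<Rightarrow> nat \<Rightarrow> real" where "Pup s a = (\<lambda>m. eta s a * Pv a m)"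

text \<open>Lie bracket of basis elements e_i, e_k of g_lambda (i,k < 6), as a coefficient vector:
  [J_a,J_b] = eps_abc J^c, [J_a,P_b] = eps_abc P^c, [P_a,J_b] = -[J_b,P_a] = eps_abc P^c,
  [P_a,P_b] = lambda eps_abc J^c.\<close>
definition br :: "real \<Rightarrow> real \<Rightarrow> nat \<Rightarrow> nat \<Rightarrow> nat \<Rightarrow> real" where
  "br s lam i k =
    (if i < 3 \<and> k < 3 then (\<Sum>c<3. (\<lambda>m. eps i k c * Jup s c m))
     else if i < 3 \<and> 3 \<le> k \<and> k < 6 then (\<Sum>c<3. (\<lambda>m. eps i (k-3) c * Pup s c m))
     else if 3 \<le> i \<and> i < 6 \<and> k < 3 then (\<Sum>c<3. (\<lambda>m. eps (i-3) k c * Pup s c m))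
     else if 3 \<le> i \<and> i < 6 \<and> 3 \<le> k \<and> k < 6
       then (\<Sum>c<3. (\<lambda>m. lam * eps (i-3) (k-3) c * Jup s c m))
     else (\<lambda>m. 0))"

definition tens :: "(nat \<Rightarrow> real) \<Rightarrow> (nat \<Rightarrow> real) \<Rightarrow> nat \<Rightarrow> nat \<Rightarrow> real" where
  "tens x y = (\<lambda>i j. x i * y j)"

text \<open>Classical Yang-Baxter bracket [[r,r]] = [r12,r13] + [r12,r23] + [r13,r23], for
  r = sum_{i,j} r_ij e_i (x) e_j.  Componentwise:
  [r12,r13] = sum r_ij r_kl [e_i,e_k] (x) e_j (x) e_l,
  [r12,r23] = sum r_ij r_kl e_i (x) [e_j,e_k] (x) e_l,
  [r13,r23] = sum r_ij r_kl e_i (x) e_k (x) [e_j,e_l].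
  cybe s lam r a b c is the coefficient of e_a (x) e_b (x) e_c.\<close>
definition cybe :: "real \<Rightarrow> real \<Rightarrow> (nat \<Rightarrow> nat \<Rightarrow> real) \<Rightarrow> nat \<Rightarrow> nat \<Rightarrow> nat \<Rightarrow> real" where
  "cybe s lam r a b c =
     (\<Sum>i<6. \<Sum>k<6. r i b * r k c * br s lam i k a)
   + (\<Sum>j<6. \<Sum>k<6. r a j * r k c * br s lam j k b)
   + (\<Sum>j<6. \<Sum>l<6. r a j * r b l * br s lam j l c)"

definition satisfies_CYBE :: "real \<Rightarrow> real \<Rightarrow> (nat \<Rightarrow> nat \<Rightarrow> real) \<Rightarrow> bool" where
  "satisfies_CYBE s lam r \<longleftrightarrow> (\<forall>a<6. \<forall>b<6. \<forall>c<6. cybe s lam r a b c = 0)"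

definition ttb :: "real \<Rightarrow> real \<Rightarrow> real \<Rightarrow> real" where
  "ttb lam \<alpha> \<beta> = \<alpha>\<^sup>2 - lam * \<beta>\<^sup>2"

definition Ktau :: "real \<Rightarrow> real \<Rightarrow> real \<Rightarrow> real \<Rightarrow> nat \<Rightarrow> nat \<Rightarrow> real" where
  "Ktau s lam \<alpha> \<beta> =
     (\<Sum>a<3. (\<lambda>i j. (\<alpha> / ttb lam \<alpha> \<beta>) * (tens (Jv a) (Pup s a) i j + tens (Pv a) (Jup s a) i j)
                 - (\<beta> / ttb lam \<alpha> \<beta>) * (lam * tens (Jv a) (Jup s a) i j + tens (Pv a) (Pup s a) i j)))"

definition mu :: "real \<Rightarrow> real \<Rightarrow> real \<Rightarrow> real" where
  "mu lam \<alpha> \<beta> = (\<alpha>\<^sup>2 + lam * \<beta>\<^sup>2) / (ttb lam \<alpha> \<beta>)\<^sup>2"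

definition nu :: "real \<Rightarrow> real \<Rightarrow> real \<Rightarrow> real" where
  "nu lam \<alpha> \<beta> = - (2 * \<alpha> * \<beta>) / (ttb lam \<alpha> \<beta>)\<^sup>2"

definition compatible_r_matrix :: "real \<Rightarrow> real \<Rightarrow> real \<Rightarrow> real \<Rightarrow> (nat \<Rightarrow> nat \<Rightarrow> real) \<Rightarrow> bool" where
  "compatible_r_matrix s lam \<alpha> \<beta> r \<longleftrightarrow>
     (\<exists>r'. (\<forall>i j. r' i j = - r' j i) \<and> r = r' + Ktau s lam \<alpha> \<beta>) \<and> satisfies_CYBE s lam r"

definition etadot :: "real \<Rightarrow> (nat \<Rightarrow> real) \<Rightarrow> (nat \<Rightarrow> real) \<Rightarrow> real" where
  "etadot s x y = (\<Sum>a<3. eta s a * x a * y a)"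

definition low :: "real \<Rightarrow> (nat \<Rightarrow> real) \<Rightarrow> nat \<Rightarrow> real" where
  "low s x a = eta s a * x a"

definition r_pq :: "real \<Rightarrow> real \<Rightarrow> real \<Rightarrow> real \<Rightarrow> (nat \<Rightarrow> real) \<Rightarrow> (nat \<Rightarrow> real) \<Rightarrow> nat \<Rightarrow> nat \<Rightarrow> real" where
  "r_pq s lam \<alpha> \<beta> p q = Ktau s lam \<alpha> \<beta> +
     (\<Sum>a<3. \<Sum>b<3. \<Sum>c<3. (\<lambda>i j. eps a b c *
        (low s p a * (tens (Pv b) (Jv c) i j + tens (Jv b) (Pv c) i j)
       + low s q a * (tens (Pv b) (Pv c) i j + lam * tens (Jv b) (Jv c) i j))))"

end

theory Submission imports Defs begin
lemma sum_fun_apply: "(\<Sum>x\<in>A. f x) i = (\<Sum>x\<in>A. f x i)"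
  by (induction A rule: infinite_finite_induct) auto

lemmas U = r_pq_def Ktau_def sum_fun_apply tens_def Jv_def Pv_def Jup_def Pup_def eta_def low_def eps_def

definition rr :: "real \<Rightarrow> real \<Rightarrow> real \<Rightarrow> real \<Rightarrow> (nat \<Rightarrow> real) \<Rightarrow> (nat \<Rightarrow> real) \<Rightarrow> nat \<Rightarrow> nat \<Rightarrow> real" where
  "rr s lam x y p q i j =
   (if i = 0 \<and> j = 0 then (- y * lam) else
   (if i = 0 \<and> j = 1 then ((q 2) * lam * s) else
   (if i = 0 \<and> j = 2 then (- (q 1) * lam * s) else
   (if i = 0 \<and> j = 3 then (x) else
   (if i = 0 \<and> j = 4 then ((p 2) * s) else
   (if i = 0 \<and> j = 5 then (- (p 1) * s) else
   (if i = 1 \<and> j = 0 then (- (q 2) * lam * s) else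
   (if i = 1 \<and> j = 1 then (- y * lam * s) else
   (if i = 1 \<and> j = 2 then ((q 0) * lam) else
   (if i = 1 \<and> j = 3 then (- (p 2) * s) else
   (if i = 1 \<and> j = 4 then (x * s) else
   (if i = 1 \<and> j = 5 then ((p 0)) else
   (if i = 2 \<and> j = 0 then ((q 1) * lam * s) else
   (if i = 2 \<and> j = 1 then (- (q 0) * lam) else
   (if i = 2 \<and> j = 2 then (- y * lam * s) else
   (if i = 2 \<and> j = 3 then ((p 1) * s) else
   (if i = 2 \<and> j = 4 then (- (p 0)) else
   (if i = 2 \<and> j = 5 then (x * s) else
   (if i = 3 \<and> j = 0 then (x) else
   (if i = 3 \<and> j = 1 then ((p 2) * s) else
   (if i = 3 \<and> j = 2 then (- (p 1) * s) else
   (if i = 3 \<and> j = 3 then (- y) else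
   (if i = 3 \<and> j = 4 then ((q 2) * s) else
   (if i = 3 \<and> j = 5 then (- (q 1) * s) else
   (if i = 4 \<and> j = 0 then (- (p 2) * s) else
   (if i = 4 \<and> j = 1 then (x * s) else
   (if i = 4 \<and> j = 2 then ((p 0)) else
   (if i = 4 \<and> j = 3 then (- (q 2) * s) else
   (if i = 4 \<and> j = 4 then (- y * s) else
   (if i = 4 \<and> j = 5 then ((q 0)) else
   (if i = 5 \<and> j = 0 then ((p 1) * s) else
   (if i = 5 \<and> j = 1 then (- (p 0)) else
   (if i = 5 \<and> j = 2 then (x * s) else
   (if i = 5 \<and> j = 3 then ((q 1) * s) else
   (if i = 5 \<and> j = 4 then (- (q 0)) else
   (if i = 5 \<and> j = 5 then (- y * s) else 0))))))))))))))))))))))))))))))))))))"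

lemma sum3: "(\<Sum>i<3. f i) = f 0 + f 1 + f 2" for f :: "nat \<Rightarrow> 'a::comm_monoid_add"
  by (simp add: lessThan_nat_numeral add.commute add.left_commute)
lemma sum6: "(\<Sum>i<6. f i) = f 0 + f 1 + f 2 + f 3 + f 4 + f 5" for f :: "nat \<Rightarrow> 'a::comm_monoid_add"
  by (simp add: lessThan_nat_numeral add.commute add.left_commute)
lemma rrtab:
  "rr s lam x y p q 0 0 = (- y * lam)"
  "rr s lam x y p q 0 (Suc 0) = ((q 2) * lam * s)"
  "rr s lam x y p q 0 2 = (- (q 1) * lam * s)"
  "rr s lam x y p q 0 3 = (x)"
  "rr s lam x y p q 0 4 = ((p 2) * s)"
  "rr s lam x y p q 0 5 = (- (p 1) * s)"
  "rr s lam x y p q (Suc 0) 0 = (- (q 2) * lam * s)"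
  "rr s lam x y p q (Suc 0) (Suc 0) = (- y * lam * s)"
  "rr s lam x y p q (Suc 0) 2 = ((q 0) * lam)"
  "rr s lam x y p q (Suc 0) 3 = (- (p 2) * s)"
  "rr s lam x y p q (Suc 0) 4 = (x * s)"
  "rr s lam x y p q (Suc 0) 5 = ((p 0))"
  "rr s lam x y p q 2 0 = ((q 1) * lam * s)"
  "rr s lam x y p q 2 (Suc 0) = (- (q 0) * lam)"
  "rr s lam x y p q 2 2 = (- y * lam * s)"
  "rr s lam x y p q 2 3 = ((p 1) * s)"
  "rr s lam x y p q 2 4 = (- (p 0))"
  "rr s lam x y p q 2 5 = (x * s)"
  "rr s lam x y p q 3 0 = (x)"
  "rr s lam x y p q 3 (Suc 0) = ((p 2) * s)"
  "rr s lam x y p q 3 2 = (- (p 1) * s)"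
  "rr s lam x y p q 3 3 = (- y)"
  "rr s lam x y p q 3 4 = ((q 2) * s)"
  "rr s lam x y p q 3 5 = (- (q 1) * s)"
  "rr s lam x y p q 4 0 = (- (p 2) * s)"
  "rr s lam x y p q 4 (Suc 0) = (x * s)"
  "rr s lam x y p q 4 2 = ((p 0))"
  "rr s lam x y p q 4 3 = (- (q 2) * s)"
  "rr s lam x y p q 4 4 = (- y * s)"
  "rr s lam x y p q 4 5 = ((q 0))"
  "rr s lam x y p q 5 0 = ((p 1) * s)"
  "rr s lam x y p q 5 (Suc 0) = (- (p 0))"
  "rr s lam x y p q 5 2 = (x * s)"
  "rr s lam x y p q 5 3 = ((q 1) * s)"
  "rr s lam x y p q 5 4 = (- (q 0))"
  "rr s lam x y p q 5 5 = (- y * s)"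
  by (simp_all add: rr_def)
lemma brtab:
  "br s lam 0 0 0 = 0"
  "br s lam 0 0 (Suc 0) = 0"
  "br s lam 0 0 2 = 0"
  "br s lam 0 0 3 = 0"
  "br s lam 0 0 4 = 0"
  "br s lam 0 0 5 = 0"
  "br s lam 0 (Suc 0) 0 = 0"
  "br s lam 0 (Suc 0) (Suc 0) = 0"
  "br s lam 0 (Suc 0) 2 = (s)"
  "br s lam 0 (Suc 0) 3 = 0"
  "br s lam 0 (Suc 0) 4 = 0"
  "br s lam 0 (Suc 0) 5 = 0"
  "br s lam 0 2 0 = 0"
  "br s lam 0 2 (Suc 0) = (- s)"
  "br s lam 0 2 2 = 0"
  "br s lam 0 2 3 = 0"
  "br s lam 0 2 4 = 0"
  "br s lam 0 2 5 = 0"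
  "br s lam 0 3 0 = 0"
  "br s lam 0 3 (Suc 0) = 0"
  "br s lam 0 3 2 = 0"
  "br s lam 0 3 3 = 0"
  "br s lam 0 3 4 = 0"
  "br s lam 0 3 5 = 0"
  "br s lam 0 4 0 = 0"
  "br s lam 0 4 (Suc 0) = 0"
  "br s lam 0 4 2 = 0"
  "br s lam 0 4 3 = 0"
  "br s lam 0 4 4 = 0"
  "br s lam 0 4 5 = (s)"
  "br s lam 0 5 0 = 0"
  "br s lam 0 5 (Suc 0) = 0"
  "br s lam 0 5 2 = 0"
  "br s lam 0 5 3 = 0"
  "br s lam 0 5 4 = (- s)"
  "br s lam 0 5 5 = 0"
  "br s lam (Suc 0) 0 0 = 0"
  "br s lam (Suc 0) 0 (Suc 0) = 0"
  "br s lam (Suc 0) 0 2 = (- s)"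
  "br s lam (Suc 0) 0 3 = 0"
  "br s lam (Suc 0) 0 4 = 0"
  "br s lam (Suc 0) 0 5 = 0"
  "br s lam (Suc 0) (Suc 0) 0 = 0"
  "br s lam (Suc 0) (Suc 0) (Suc 0) = 0"
  "br s lam (Suc 0) (Suc 0) 2 = 0"
  "br s lam (Suc 0) (Suc 0) 3 = 0"
  "br s lam (Suc 0) (Suc 0) 4 = 0"
  "br s lam (Suc 0) (Suc 0) 5 = 0"
  "br s lam (Suc 0) 2 0 = (1)"
  "br s lam (Suc 0) 2 (Suc 0) = 0"
  "br s lam (Suc 0) 2 2 = 0"
  "br s lam (Suc 0) 2 3 = 0"
  "br s lam (Suc 0) 2 4 = 0"
  "br s lam (Suc 0) 2 5 = 0"
  "br s lam (Suc 0) 3 0 = 0"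
  "br s lam (Suc 0) 3 (Suc 0) = 0"
  "br s lam (Suc 0) 3 2 = 0"
  "br s lam (Suc 0) 3 3 = 0"
  "br s lam (Suc 0) 3 4 = 0"
  "br s lam (Suc 0) 3 5 = (- s)"
  "br s lam (Suc 0) 4 0 = 0"
  "br s lam (Suc 0) 4 (Suc 0) = 0"
  "br s lam (Suc 0) 4 2 = 0"
  "br s lam (Suc 0) 4 3 = 0"
  "br s lam (Suc 0) 4 4 = 0"
  "br s lam (Suc 0) 4 5 = 0"
  "br s lam (Suc 0) 5 0 = 0"
  "br s lam (Suc 0) 5 (Suc 0) = 0"
  "br s lam (Suc 0) 5 2 = 0"
  "br s lam (Suc 0) 5 3 = (1)"
  "br s lam (Suc 0) 5 4 = 0"
  "br s lam (Suc 0) 5 5 = 0"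
  "br s lam 2 0 0 = 0"
  "br s lam 2 0 (Suc 0) = (s)"
  "br s lam 2 0 2 = 0"
  "br s lam 2 0 3 = 0"
  "br s lam 2 0 4 = 0"
  "br s lam 2 0 5 = 0"
  "br s lam 2 (Suc 0) 0 = (- 1)"
  "br s lam 2 (Suc 0) (Suc 0) = 0"
  "br s lam 2 (Suc 0) 2 = 0"
  "br s lam 2 (Suc 0) 3 = 0"
  "br s lam 2 (Suc 0) 4 = 0"
  "br s lam 2 (Suc 0) 5 = 0"
  "br s lam 2 2 0 = 0"
  "br s lam 2 2 (Suc 0) = 0"
  "br s lam 2 2 2 = 0"
  "br s lam 2 2 3 = 0"
  "br s lam 2 2 4 = 0"
  "br s lam 2 2 5 = 0"
  "br s lam 2 3 0 = 0"
  "br s lam 2 3 (Suc 0) = 0"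
  "br s lam 2 3 2 = 0"
  "br s lam 2 3 3 = 0"
  "br s lam 2 3 4 = (s)"
  "br s lam 2 3 5 = 0"
  "br s lam 2 4 0 = 0"
  "br s lam 2 4 (Suc 0) = 0"
  "br s lam 2 4 2 = 0"
  "br s lam 2 4 3 = (- 1)"
  "br s lam 2 4 4 = 0"
  "br s lam 2 4 5 = 0"
  "br s lam 2 5 0 = 0"
  "br s lam 2 5 (Suc 0) = 0"
  "br s lam 2 5 2 = 0"
  "br s lam 2 5 3 = 0"
  "br s lam 2 5 4 = 0"
  "br s lam 2 5 5 = 0"
  "br s lam 3 0 0 = 0"
  "br s lam 3 0 (Suc 0) = 0"
  "br s lam 3 0 2 = 0"
  "br s lam 3 0 3 = 0"
  "br s lam 3 0 4 = 0"
  "br s lam 3 0 5 = 0"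
  "br s lam 3 (Suc 0) 0 = 0"
  "br s lam 3 (Suc 0) (Suc 0) = 0"
  "br s lam 3 (Suc 0) 2 = 0"
  "br s lam 3 (Suc 0) 3 = 0"
  "br s lam 3 (Suc 0) 4 = 0"
  "br s lam 3 (Suc 0) 5 = (s)"
  "br s lam 3 2 0 = 0"
  "br s lam 3 2 (Suc 0) = 0"
  "br s lam 3 2 2 = 0"
  "br s lam 3 2 3 = 0"
  "br s lam 3 2 4 = (- s)"
  "br s lam 3 2 5 = 0"
  "br s lam 3 3 0 = 0"
  "br s lam 3 3 (Suc 0) = 0"
  "br s lam 3 3 2 = 0"
  "br s lam 3 3 3 = 0"
  "br s lam 3 3 4 = 0"
  "br s lam 3 3 5 = 0"
  "br s lam 3 4 0 = 0"
  "br s lam 3 4 (Suc 0) = 0"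
  "br s lam 3 4 2 = (lam * s)"
  "br s lam 3 4 3 = 0"
  "br s lam 3 4 4 = 0"
  "br s lam 3 4 5 = 0"
  "br s lam 3 5 0 = 0"
  "br s lam 3 5 (Suc 0) = (- lam * s)"
  "br s lam 3 5 2 = 0"
  "br s lam 3 5 3 = 0"
  "br s lam 3 5 4 = 0"
  "br s lam 3 5 5 = 0"
  "br s lam 4 0 0 = 0"
  "br s lam 4 0 (Suc 0) = 0"
  "br s lam 4 0 2 = 0"
  "br s lam 4 0 3 = 0"
  "br s lam 4 0 4 = 0"
  "br s lam 4 0 5 = (- s)"
  "br s lam 4 (Suc 0) 0 = 0"
  "br s lam 4 (Suc 0) (Suc 0) = 0"
  "br s lam 4 (Suc 0) 2 = 0"
  "br s lam 4 (Suc 0) 3 = 0"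
  "br s lam 4 (Suc 0) 4 = 0"
  "br s lam 4 (Suc 0) 5 = 0"
  "br s lam 4 2 0 = 0"
  "br s lam 4 2 (Suc 0) = 0"
  "br s lam 4 2 2 = 0"
  "br s lam 4 2 3 = (1)"
  "br s lam 4 2 4 = 0"
  "br s lam 4 2 5 = 0"
  "br s lam 4 3 0 = 0"
  "br s lam 4 3 (Suc 0) = 0"
  "br s lam 4 3 2 = (- lam * s)"
  "br s lam 4 3 3 = 0"
  "br s lam 4 3 4 = 0"
  "br s lam 4 3 5 = 0"
  "br s lam 4 4 0 = 0"
  "br s lam 4 4 (Suc 0) = 0"
  "br s lam 4 4 2 = 0"
  "br s lam 4 4 3 = 0"
  "br s lam 4 4 4 = 0"
  "br s lam 4 4 5 = 0"
  "br s lam 4 5 0 = (lam)"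
  "br s lam 4 5 (Suc 0) = 0"
  "br s lam 4 5 2 = 0"
  "br s lam 4 5 3 = 0"
  "br s lam 4 5 4 = 0"
  "br s lam 4 5 5 = 0"
  "br s lam 5 0 0 = 0"
  "br s lam 5 0 (Suc 0) = 0"
  "br s lam 5 0 2 = 0"
  "br s lam 5 0 3 = 0"
  "br s lam 5 0 4 = (s)"
  "br s lam 5 0 5 = 0"
  "br s lam 5 (Suc 0) 0 = 0"
  "br s lam 5 (Suc 0) (Suc 0) = 0"
  "br s lam 5 (Suc 0) 2 = 0"
  "br s lam 5 (Suc 0) 3 = (- 1)"
  "br s lam 5 (Suc 0) 4 = 0"
  "br s lam 5 (Suc 0) 5 = 0"
  "br s lam 5 2 0 = 0"
  "br s lam 5 2 (Suc 0) = 0"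
  "br s lam 5 2 2 = 0"
  "br s lam 5 2 3 = 0"
  "br s lam 5 2 4 = 0"
  "br s lam 5 2 5 = 0"
  "br s lam 5 3 0 = 0"
  "br s lam 5 3 (Suc 0) = (lam * s)"
  "br s lam 5 3 2 = 0"
  "br s lam 5 3 3 = 0"
  "br s lam 5 3 4 = 0"
  "br s lam 5 3 5 = 0"
  "br s lam 5 4 0 = (- lam)"
  "br s lam 5 4 (Suc 0) = 0"
  "br s lam 5 4 2 = 0"
  "br s lam 5 4 3 = 0"
  "br s lam 5 4 4 = 0"
  "br s lam 5 4 5 = 0"
  "br s lam 5 5 0 = 0"
  "br s lam 5 5 (Suc 0) = 0"
  "br s lam 5 5 2 = 0"
  "br s lam 5 5 3 = 0"
  "br s lam 5 5 4 = 0"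
  "br s lam 5 5 5 = 0"
  by (simp_all add: br_def eps_def Jup_def Pup_def Jv_def Pv_def eta_def sum_fun_apply sum3)
definition HH1 :: "real \<Rightarrow> real \<Rightarrow> real \<Rightarrow> real \<Rightarrow> (nat \<Rightarrow> real) \<Rightarrow> (nat \<Rightarrow> real) \<Rightarrow> real" where
  "HH1 s lam x y p q = p 0 * p 0 + s * p 1 * p 1 + s * p 2 * p 2 + lam * (q 0 * q 0 + s * q 1 * q 1 + s * q 2 * q 2) + x * x + lam * y * y"
definition HH2 :: "real \<Rightarrow> real \<Rightarrow> real \<Rightarrow> (nat \<Rightarrow> real) \<Rightarrow> (nat \<Rightarrow> real) \<Rightarrow> real" where
  "HH2 s x y p q = p 0 * q 0 + s * p 1 * q 1 + s * p 2 * q 2 - x * y"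
lemma cyb_p:
  "cybe 1 lam (rr 1 lam x y p q) 0 0 0 = 0"
  "cybe 1 lam (rr 1 lam x y p q) 0 0 1 = 0"
  "cybe 1 lam (rr 1 lam x y p q) 0 0 2 = 0"
  "cybe 1 lam (rr 1 lam x y p q) 0 0 3 = 0"
  "cybe 1 lam (rr 1 lam x y p q) 0 0 4 = 0"
  "cybe 1 lam (rr 1 lam x y p q) 0 0 5 = 0"
  "cybe 1 lam (rr 1 lam x y p q) 0 1 0 = 0"
  "cybe 1 lam (rr 1 lam x y p q) 0 1 1 = 0"
  "cybe 1 lam (rr 1 lam x y p q) 0 1 2 = (lam) * HH1 1 lam x y p q"
  "cybe 1 lam (rr 1 lam x y p q) 0 1 3 = 0"
  "cybe 1 lam (rr 1 lam x y p q) 0 1 4 = 0"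
  "cybe 1 lam (rr 1 lam x y p q) 0 1 5 = (2 * lam) * HH2 1 x y p q"
  "cybe 1 lam (rr 1 lam x y p q) 0 2 0 = 0"
  "cybe 1 lam (rr 1 lam x y p q) 0 2 1 = (- lam) * HH1 1 lam x y p q"
  "cybe 1 lam (rr 1 lam x y p q) 0 2 2 = 0"
  "cybe 1 lam (rr 1 lam x y p q) 0 2 3 = 0"
  "cybe 1 lam (rr 1 lam x y p q) 0 2 4 = (- 2 * lam) * HH2 1 x y p q"
  "cybe 1 lam (rr 1 lam x y p q) 0 2 5 = 0"
  "cybe 1 lam (rr 1 lam x y p q) 0 3 0 = 0"
  "cybe 1 lam (rr 1 lam x y p q) 0 3 1 = 0"
  "cybe 1 lam (rr 1 lam x y p q) 0 3 2 = 0"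
  "cybe 1 lam (rr 1 lam x y p q) 0 3 3 = 0"
  "cybe 1 lam (rr 1 lam x y p q) 0 3 4 = 0"
  "cybe 1 lam (rr 1 lam x y p q) 0 3 5 = 0"
  "cybe 1 lam (rr 1 lam x y p q) 0 4 0 = 0"
  "cybe 1 lam (rr 1 lam x y p q) 0 4 1 = 0"
  "cybe 1 lam (rr 1 lam x y p q) 0 4 2 = (2 * lam) * HH2 1 x y p q"
  "cybe 1 lam (rr 1 lam x y p q) 0 4 3 = 0"
  "cybe 1 lam (rr 1 lam x y p q) 0 4 4 = 0"
  "cybe 1 lam (rr 1 lam x y p q) 0 4 5 = (1) * HH1 1 lam x y p q"
  "cybe 1 lam (rr 1 lam x y p q) 0 5 0 = 0"
  "cybe 1 lam (rr 1 lam x y p q) 0 5 1 = (- 2 * lam) * HH2 1 x y p q"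
  "cybe 1 lam (rr 1 lam x y p q) 0 5 2 = 0"
  "cybe 1 lam (rr 1 lam x y p q) 0 5 3 = 0"
  "cybe 1 lam (rr 1 lam x y p q) 0 5 4 = (- 1) * HH1 1 lam x y p q"
  "cybe 1 lam (rr 1 lam x y p q) 0 5 5 = 0"
  "cybe 1 lam (rr 1 lam x y p q) 1 0 0 = 0"
  "cybe 1 lam (rr 1 lam x y p q) 1 0 1 = 0"
  "cybe 1 lam (rr 1 lam x y p q) 1 0 2 = (- lam) * HH1 1 lam x y p q"
  "cybe 1 lam (rr 1 lam x y p q) 1 0 3 = 0"
  "cybe 1 lam (rr 1 lam x y p q) 1 0 4 = 0"
  "cybe 1 lam (rr 1 lam x y p q) 1 0 5 = (- 2 * lam) * HH2 1 x y p q"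
  "cybe 1 lam (rr 1 lam x y p q) 1 1 0 = 0"
  "cybe 1 lam (rr 1 lam x y p q) 1 1 1 = 0"
  "cybe 1 lam (rr 1 lam x y p q) 1 1 2 = 0"
  "cybe 1 lam (rr 1 lam x y p q) 1 1 3 = 0"
  "cybe 1 lam (rr 1 lam x y p q) 1 1 4 = 0"
  "cybe 1 lam (rr 1 lam x y p q) 1 1 5 = 0"
  "cybe 1 lam (rr 1 lam x y p q) 1 2 0 = (lam) * HH1 1 lam x y p q"
  "cybe 1 lam (rr 1 lam x y p q) 1 2 1 = 0"
  "cybe 1 lam (rr 1 lam x y p q) 1 2 2 = 0"
  "cybe 1 lam (rr 1 lam x y p q) 1 2 3 = (2 * lam) * HH2 1 x y p q"
  "cybe 1 lam (rr 1 lam x y p q) 1 2 4 = 0"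
  "cybe 1 lam (rr 1 lam x y p q) 1 2 5 = 0"
  "cybe 1 lam (rr 1 lam x y p q) 1 3 0 = 0"
  "cybe 1 lam (rr 1 lam x y p q) 1 3 1 = 0"
  "cybe 1 lam (rr 1 lam x y p q) 1 3 2 = (- 2 * lam) * HH2 1 x y p q"
  "cybe 1 lam (rr 1 lam x y p q) 1 3 3 = 0"
  "cybe 1 lam (rr 1 lam x y p q) 1 3 4 = 0"
  "cybe 1 lam (rr 1 lam x y p q) 1 3 5 = (- 1) * HH1 1 lam x y p q"
  "cybe 1 lam (rr 1 lam x y p q) 1 4 0 = 0"
  "cybe 1 lam (rr 1 lam x y p q) 1 4 1 = 0"
  "cybe 1 lam (rr 1 lam x y p q) 1 4 2 = 0"
  "cybe 1 lam (rr 1 lam x y p q) 1 4 3 = 0"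
  "cybe 1 lam (rr 1 lam x y p q) 1 4 4 = 0"
  "cybe 1 lam (rr 1 lam x y p q) 1 4 5 = 0"
  "cybe 1 lam (rr 1 lam x y p q) 1 5 0 = (2 * lam) * HH2 1 x y p q"
  "cybe 1 lam (rr 1 lam x y p q) 1 5 1 = 0"
  "cybe 1 lam (rr 1 lam x y p q) 1 5 2 = 0"
  "cybe 1 lam (rr 1 lam x y p q) 1 5 3 = (1) * HH1 1 lam x y p q"
  "cybe 1 lam (rr 1 lam x y p q) 1 5 4 = 0"
  "cybe 1 lam (rr 1 lam x y p q) 1 5 5 = 0"
  "cybe 1 lam (rr 1 lam x y p q) 2 0 0 = 0"
  "cybe 1 lam (rr 1 lam x y p q) 2 0 1 = (lam) * HH1 1 lam x y p q"
  "cybe 1 lam (rr 1 lam x y p q) 2 0 2 = 0"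
  "cybe 1 lam (rr 1 lam x y p q) 2 0 3 = 0"
  "cybe 1 lam (rr 1 lam x y p q) 2 0 4 = (2 * lam) * HH2 1 x y p q"
  "cybe 1 lam (rr 1 lam x y p q) 2 0 5 = 0"
  "cybe 1 lam (rr 1 lam x y p q) 2 1 0 = (- lam) * HH1 1 lam x y p q"
  "cybe 1 lam (rr 1 lam x y p q) 2 1 1 = 0"
  "cybe 1 lam (rr 1 lam x y p q) 2 1 2 = 0"
  "cybe 1 lam (rr 1 lam x y p q) 2 1 3 = (- 2 * lam) * HH2 1 x y p q"
  "cybe 1 lam (rr 1 lam x y p q) 2 1 4 = 0"
  "cybe 1 lam (rr 1 lam x y p q) 2 1 5 = 0"
  "cybe 1 lam (rr 1 lam x y p q) 2 2 0 = 0"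
  "cybe 1 lam (rr 1 lam x y p q) 2 2 1 = 0"
  "cybe 1 lam (rr 1 lam x y p q) 2 2 2 = 0"
  "cybe 1 lam (rr 1 lam x y p q) 2 2 3 = 0"
  "cybe 1 lam (rr 1 lam x y p q) 2 2 4 = 0"
  "cybe 1 lam (rr 1 lam x y p q) 2 2 5 = 0"
  "cybe 1 lam (rr 1 lam x y p q) 2 3 0 = 0"
  "cybe 1 lam (rr 1 lam x y p q) 2 3 1 = (2 * lam) * HH2 1 x y p q"
  "cybe 1 lam (rr 1 lam x y p q) 2 3 2 = 0"
  "cybe 1 lam (rr 1 lam x y p q) 2 3 3 = 0"
  "cybe 1 lam (rr 1 lam x y p q) 2 3 4 = (1) * HH1 1 lam x y p q"
  "cybe 1 lam (rr 1 lam x y p q) 2 3 5 = 0"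
  "cybe 1 lam (rr 1 lam x y p q) 2 4 0 = (- 2 * lam) * HH2 1 x y p q"
  "cybe 1 lam (rr 1 lam x y p q) 2 4 1 = 0"
  "cybe 1 lam (rr 1 lam x y p q) 2 4 2 = 0"
  "cybe 1 lam (rr 1 lam x y p q) 2 4 3 = (- 1) * HH1 1 lam x y p q"
  "cybe 1 lam (rr 1 lam x y p q) 2 4 4 = 0"
  "cybe 1 lam (rr 1 lam x y p q) 2 4 5 = 0"
  "cybe 1 lam (rr 1 lam x y p q) 2 5 0 = 0"
  "cybe 1 lam (rr 1 lam x y p q) 2 5 1 = 0"
  "cybe 1 lam (rr 1 lam x y p q) 2 5 2 = 0"
  "cybe 1 lam (rr 1 lam x y p q) 2 5 3 = 0"
  "cybe 1 lam (rr 1 lam x y p q) 2 5 4 = 0"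
  "cybe 1 lam (rr 1 lam x y p q) 2 5 5 = 0"
  "cybe 1 lam (rr 1 lam x y p q) 3 0 0 = 0"
  "cybe 1 lam (rr 1 lam x y p q) 3 0 1 = 0"
  "cybe 1 lam (rr 1 lam x y p q) 3 0 2 = 0"
  "cybe 1 lam (rr 1 lam x y p q) 3 0 3 = 0"
  "cybe 1 lam (rr 1 lam x y p q) 3 0 4 = 0"
  "cybe 1 lam (rr 1 lam x y p q) 3 0 5 = 0"
  "cybe 1 lam (rr 1 lam x y p q) 3 1 0 = 0"
  "cybe 1 lam (rr 1 lam x y p q) 3 1 1 = 0"
  "cybe 1 lam (rr 1 lam x y p q) 3 1 2 = (2 * lam) * HH2 1 x y p q"
  "cybe 1 lam (rr 1 lam x y p q) 3 1 3 = 0"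
  "cybe 1 lam (rr 1 lam x y p q) 3 1 4 = 0"
  "cybe 1 lam (rr 1 lam x y p q) 3 1 5 = (1) * HH1 1 lam x y p q"
  "cybe 1 lam (rr 1 lam x y p q) 3 2 0 = 0"
  "cybe 1 lam (rr 1 lam x y p q) 3 2 1 = (- 2 * lam) * HH2 1 x y p q"
  "cybe 1 lam (rr 1 lam x y p q) 3 2 2 = 0"
  "cybe 1 lam (rr 1 lam x y p q) 3 2 3 = 0"
  "cybe 1 lam (rr 1 lam x y p q) 3 2 4 = (- 1) * HH1 1 lam x y p q"
  "cybe 1 lam (rr 1 lam x y p q) 3 2 5 = 0"
  "cybe 1 lam (rr 1 lam x y p q) 3 3 0 = 0"
  "cybe 1 lam (rr 1 lam x y p q) 3 3 1 = 0"
  "cybe 1 lam (rr 1 lam x y p q) 3 3 2 = 0"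
  "cybe 1 lam (rr 1 lam x y p q) 3 3 3 = 0"
  "cybe 1 lam (rr 1 lam x y p q) 3 3 4 = 0"
  "cybe 1 lam (rr 1 lam x y p q) 3 3 5 = 0"
  "cybe 1 lam (rr 1 lam x y p q) 3 4 0 = 0"
  "cybe 1 lam (rr 1 lam x y p q) 3 4 1 = 0"
  "cybe 1 lam (rr 1 lam x y p q) 3 4 2 = (1) * HH1 1 lam x y p q"
  "cybe 1 lam (rr 1 lam x y p q) 3 4 3 = 0"
  "cybe 1 lam (rr 1 lam x y p q) 3 4 4 = 0"
  "cybe 1 lam (rr 1 lam x y p q) 3 4 5 = (2) * HH2 1 x y p q"
  "cybe 1 lam (rr 1 lam x y p q) 3 5 0 = 0"
  "cybe 1 lam (rr 1 lam x y p q) 3 5 1 = (- 1) * HH1 1 lam x y p q"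
  "cybe 1 lam (rr 1 lam x y p q) 3 5 2 = 0"
  "cybe 1 lam (rr 1 lam x y p q) 3 5 3 = 0"
  "cybe 1 lam (rr 1 lam x y p q) 3 5 4 = (- 2) * HH2 1 x y p q"
  "cybe 1 lam (rr 1 lam x y p q) 3 5 5 = 0"
  "cybe 1 lam (rr 1 lam x y p q) 4 0 0 = 0"
  "cybe 1 lam (rr 1 lam x y p q) 4 0 1 = 0"
  "cybe 1 lam (rr 1 lam x y p q) 4 0 2 = (- 2 * lam) * HH2 1 x y p q"
  "cybe 1 lam (rr 1 lam x y p q) 4 0 3 = 0"
  "cybe 1 lam (rr 1 lam x y p q) 4 0 4 = 0"
  "cybe 1 lam (rr 1 lam x y p q) 4 0 5 = (- 1) * HH1 1 lam x y p q"
  "cybe 1 lam (rr 1 lam x y p q) 4 1 0 = 0"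
  "cybe 1 lam (rr 1 lam x y p q) 4 1 1 = 0"
  "cybe 1 lam (rr 1 lam x y p q) 4 1 2 = 0"
  "cybe 1 lam (rr 1 lam x y p q) 4 1 3 = 0"
  "cybe 1 lam (rr 1 lam x y p q) 4 1 4 = 0"
  "cybe 1 lam (rr 1 lam x y p q) 4 1 5 = 0"
  "cybe 1 lam (rr 1 lam x y p q) 4 2 0 = (2 * lam) * HH2 1 x y p q"
  "cybe 1 lam (rr 1 lam x y p q) 4 2 1 = 0"
  "cybe 1 lam (rr 1 lam x y p q) 4 2 2 = 0"
  "cybe 1 lam (rr 1 lam x y p q) 4 2 3 = (1) * HH1 1 lam x y p q"
  "cybe 1 lam (rr 1 lam x y p q) 4 2 4 = 0"
  "cybe 1 lam (rr 1 lam x y p q) 4 2 5 = 0"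
  "cybe 1 lam (rr 1 lam x y p q) 4 3 0 = 0"
  "cybe 1 lam (rr 1 lam x y p q) 4 3 1 = 0"
  "cybe 1 lam (rr 1 lam x y p q) 4 3 2 = (- 1) * HH1 1 lam x y p q"
  "cybe 1 lam (rr 1 lam x y p q) 4 3 3 = 0"
  "cybe 1 lam (rr 1 lam x y p q) 4 3 4 = 0"
  "cybe 1 lam (rr 1 lam x y p q) 4 3 5 = (- 2) * HH2 1 x y p q"
  "cybe 1 lam (rr 1 lam x y p q) 4 4 0 = 0"
  "cybe 1 lam (rr 1 lam x y p q) 4 4 1 = 0"
  "cybe 1 lam (rr 1 lam x y p q) 4 4 2 = 0"
  "cybe 1 lam (rr 1 lam x y p q) 4 4 3 = 0"
  "cybe 1 lam (rr 1 lam x y p q) 4 4 4 = 0"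
  "cybe 1 lam (rr 1 lam x y p q) 4 4 5 = 0"
  "cybe 1 lam (rr 1 lam x y p q) 4 5 0 = (1) * HH1 1 lam x y p q"
  "cybe 1 lam (rr 1 lam x y p q) 4 5 1 = 0"
  "cybe 1 lam (rr 1 lam x y p q) 4 5 2 = 0"
  "cybe 1 lam (rr 1 lam x y p q) 4 5 3 = (2) * HH2 1 x y p q"
  "cybe 1 lam (rr 1 lam x y p q) 4 5 4 = 0"
  "cybe 1 lam (rr 1 lam x y p q) 4 5 5 = 0"
  "cybe 1 lam (rr 1 lam x y p q) 5 0 0 = 0"
  "cybe 1 lam (rr 1 lam x y p q) 5 0 1 = (2 * lam) * HH2 1 x y p q"
  "cybe 1 lam (rr 1 lam x y p q) 5 0 2 = 0"
  "cybe 1 lam (rr 1 lam x y p q) 5 0 3 = 0"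
  "cybe 1 lam (rr 1 lam x y p q) 5 0 4 = (1) * HH1 1 lam x y p q"
  "cybe 1 lam (rr 1 lam x y p q) 5 0 5 = 0"
  "cybe 1 lam (rr 1 lam x y p q) 5 1 0 = (- 2 * lam) * HH2 1 x y p q"
  "cybe 1 lam (rr 1 lam x y p q) 5 1 1 = 0"
  "cybe 1 lam (rr 1 lam x y p q) 5 1 2 = 0"
  "cybe 1 lam (rr 1 lam x y p q) 5 1 3 = (- 1) * HH1 1 lam x y p q"
  "cybe 1 lam (rr 1 lam x y p q) 5 1 4 = 0"
  "cybe 1 lam (rr 1 lam x y p q) 5 1 5 = 0"
  "cybe 1 lam (rr 1 lam x y p q) 5 2 0 = 0"
  "cybe 1 lam (rr 1 lam x y p q) 5 2 1 = 0"
  "cybe 1 lam (rr 1 lam x y p q) 5 2 2 = 0"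
  "cybe 1 lam (rr 1 lam x y p q) 5 2 3 = 0"
  "cybe 1 lam (rr 1 lam x y p q) 5 2 4 = 0"
  "cybe 1 lam (rr 1 lam x y p q) 5 2 5 = 0"
  "cybe 1 lam (rr 1 lam x y p q) 5 3 0 = 0"
  "cybe 1 lam (rr 1 lam x y p q) 5 3 1 = (1) * HH1 1 lam x y p q"
  "cybe 1 lam (rr 1 lam x y p q) 5 3 2 = 0"
  "cybe 1 lam (rr 1 lam x y p q) 5 3 3 = 0"
  "cybe 1 lam (rr 1 lam x y p q) 5 3 4 = (2) * HH2 1 x y p q"
  "cybe 1 lam (rr 1 lam x y p q) 5 3 5 = 0"
  "cybe 1 lam (rr 1 lam x y p q) 5 4 0 = (- 1) * HH1 1 lam x y p q"
  "cybe 1 lam (rr 1 lam x y p q) 5 4 1 = 0"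
  "cybe 1 lam (rr 1 lam x y p q) 5 4 2 = 0"
  "cybe 1 lam (rr 1 lam x y p q) 5 4 3 = (- 2) * HH2 1 x y p q"
  "cybe 1 lam (rr 1 lam x y p q) 5 4 4 = 0"
  "cybe 1 lam (rr 1 lam x y p q) 5 4 5 = 0"
  "cybe 1 lam (rr 1 lam x y p q) 5 5 0 = 0"
  "cybe 1 lam (rr 1 lam x y p q) 5 5 1 = 0"
  "cybe 1 lam (rr 1 lam x y p q) 5 5 2 = 0"
  "cybe 1 lam (rr 1 lam x y p q) 5 5 3 = 0"
  "cybe 1 lam (rr 1 lam x y p q) 5 5 4 = 0"
  "cybe 1 lam (rr 1 lam x y p q) 5 5 5 = 0"
  by (simp add: cybe_def sum6 rrtab brtab HH1_def HH2_def; algebra)+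
lemma cyb_m:
  "cybe (-1) lam (rr (-1) lam x y p q) 0 0 0 = 0"
  "cybe (-1) lam (rr (-1) lam x y p q) 0 0 1 = 0"
  "cybe (-1) lam (rr (-1) lam x y p q) 0 0 2 = 0"
  "cybe (-1) lam (rr (-1) lam x y p q) 0 0 3 = 0"
  "cybe (-1) lam (rr (-1) lam x y p q) 0 0 4 = 0"
  "cybe (-1) lam (rr (-1) lam x y p q) 0 0 5 = 0"
  "cybe (-1) lam (rr (-1) lam x y p q) 0 1 0 = 0"
  "cybe (-1) lam (rr (-1) lam x y p q) 0 1 1 = 0"
  "cybe (-1) lam (rr (-1) lam x y p q) 0 1 2 = (lam) * HH1 (-1) lam x y p q"
  "cybe (-1) lam (rr (-1) lam x y p q) 0 1 3 = 0"
  "cybe (-1) lam (rr (-1) lam x y p q) 0 1 4 = 0"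
  "cybe (-1) lam (rr (-1) lam x y p q) 0 1 5 = (2 * lam) * HH2 (-1) x y p q"
  "cybe (-1) lam (rr (-1) lam x y p q) 0 2 0 = 0"
  "cybe (-1) lam (rr (-1) lam x y p q) 0 2 1 = (- lam) * HH1 (-1) lam x y p q"
  "cybe (-1) lam (rr (-1) lam x y p q) 0 2 2 = 0"
  "cybe (-1) lam (rr (-1) lam x y p q) 0 2 3 = 0"
  "cybe (-1) lam (rr (-1) lam x y p q) 0 2 4 = (- 2 * lam) * HH2 (-1) x y p q"
  "cybe (-1) lam (rr (-1) lam x y p q) 0 2 5 = 0"
  "cybe (-1) lam (rr (-1) lam x y p q) 0 3 0 = 0"
  "cybe (-1) lam (rr (-1) lam x y p q) 0 3 1 = 0"
  "cybe (-1) lam (rr (-1) lam x y p q) 0 3 2 = 0"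
  "cybe (-1) lam (rr (-1) lam x y p q) 0 3 3 = 0"
  "cybe (-1) lam (rr (-1) lam x y p q) 0 3 4 = 0"
  "cybe (-1) lam (rr (-1) lam x y p q) 0 3 5 = 0"
  "cybe (-1) lam (rr (-1) lam x y p q) 0 4 0 = 0"
  "cybe (-1) lam (rr (-1) lam x y p q) 0 4 1 = 0"
  "cybe (-1) lam (rr (-1) lam x y p q) 0 4 2 = (2 * lam) * HH2 (-1) x y p q"
  "cybe (-1) lam (rr (-1) lam x y p q) 0 4 3 = 0"
  "cybe (-1) lam (rr (-1) lam x y p q) 0 4 4 = 0"
  "cybe (-1) lam (rr (-1) lam x y p q) 0 4 5 = (1) * HH1 (-1) lam x y p q"
  "cybe (-1) lam (rr (-1) lam x y p q) 0 5 0 = 0"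
  "cybe (-1) lam (rr (-1) lam x y p q) 0 5 1 = (- 2 * lam) * HH2 (-1) x y p q"
  "cybe (-1) lam (rr (-1) lam x y p q) 0 5 2 = 0"
  "cybe (-1) lam (rr (-1) lam x y p q) 0 5 3 = 0"
  "cybe (-1) lam (rr (-1) lam x y p q) 0 5 4 = (- 1) * HH1 (-1) lam x y p q"
  "cybe (-1) lam (rr (-1) lam x y p q) 0 5 5 = 0"
  "cybe (-1) lam (rr (-1) lam x y p q) 1 0 0 = 0"
  "cybe (-1) lam (rr (-1) lam x y p q) 1 0 1 = 0"
  "cybe (-1) lam (rr (-1) lam x y p q) 1 0 2 = (- lam) * HH1 (-1) lam x y p q"
  "cybe (-1) lam (rr (-1) lam x y p q) 1 0 3 = 0"
  "cybe (-1) lam (rr (-1) lam x y p q) 1 0 4 = 0"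
  "cybe (-1) lam (rr (-1) lam x y p q) 1 0 5 = (- 2 * lam) * HH2 (-1) x y p q"
  "cybe (-1) lam (rr (-1) lam x y p q) 1 1 0 = 0"
  "cybe (-1) lam (rr (-1) lam x y p q) 1 1 1 = 0"
  "cybe (-1) lam (rr (-1) lam x y p q) 1 1 2 = 0"
  "cybe (-1) lam (rr (-1) lam x y p q) 1 1 3 = 0"
  "cybe (-1) lam (rr (-1) lam x y p q) 1 1 4 = 0"
  "cybe (-1) lam (rr (-1) lam x y p q) 1 1 5 = 0"
  "cybe (-1) lam (rr (-1) lam x y p q) 1 2 0 = (lam) * HH1 (-1) lam x y p q"
  "cybe (-1) lam (rr (-1) lam x y p q) 1 2 1 = 0"
  "cybe (-1) lam (rr (-1) lam x y p q) 1 2 2 = 0"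
  "cybe (-1) lam (rr (-1) lam x y p q) 1 2 3 = (2 * lam) * HH2 (-1) x y p q"
  "cybe (-1) lam (rr (-1) lam x y p q) 1 2 4 = 0"
  "cybe (-1) lam (rr (-1) lam x y p q) 1 2 5 = 0"
  "cybe (-1) lam (rr (-1) lam x y p q) 1 3 0 = 0"
  "cybe (-1) lam (rr (-1) lam x y p q) 1 3 1 = 0"
  "cybe (-1) lam (rr (-1) lam x y p q) 1 3 2 = (- 2 * lam) * HH2 (-1) x y p q"
  "cybe (-1) lam (rr (-1) lam x y p q) 1 3 3 = 0"
  "cybe (-1) lam (rr (-1) lam x y p q) 1 3 4 = 0"
  "cybe (-1) lam (rr (-1) lam x y p q) 1 3 5 = (- 1) * HH1 (-1) lam x y p q"
  "cybe (-1) lam (rr (-1) lam x y p q) 1 4 0 = 0"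
  "cybe (-1) lam (rr (-1) lam x y p q) 1 4 1 = 0"
  "cybe (-1) lam (rr (-1) lam x y p q) 1 4 2 = 0"
  "cybe (-1) lam (rr (-1) lam x y p q) 1 4 3 = 0"
  "cybe (-1) lam (rr (-1) lam x y p q) 1 4 4 = 0"
  "cybe (-1) lam (rr (-1) lam x y p q) 1 4 5 = 0"
  "cybe (-1) lam (rr (-1) lam x y p q) 1 5 0 = (2 * lam) * HH2 (-1) x y p q"
  "cybe (-1) lam (rr (-1) lam x y p q) 1 5 1 = 0"
  "cybe (-1) lam (rr (-1) lam x y p q) 1 5 2 = 0"
  "cybe (-1) lam (rr (-1) lam x y p q) 1 5 3 = (1) * HH1 (-1) lam x y p q"
  "cybe (-1) lam (rr (-1) lam x y p q) 1 5 4 = 0"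
  "cybe (-1) lam (rr (-1) lam x y p q) 1 5 5 = 0"
  "cybe (-1) lam (rr (-1) lam x y p q) 2 0 0 = 0"
  "cybe (-1) lam (rr (-1) lam x y p q) 2 0 1 = (lam) * HH1 (-1) lam x y p q"
  "cybe (-1) lam (rr (-1) lam x y p q) 2 0 2 = 0"
  "cybe (-1) lam (rr (-1) lam x y p q) 2 0 3 = 0"
  "cybe (-1) lam (rr (-1) lam x y p q) 2 0 4 = (2 * lam) * HH2 (-1) x y p q"
  "cybe (-1) lam (rr (-1) lam x y p q) 2 0 5 = 0"
  "cybe (-1) lam (rr (-1) lam x y p q) 2 1 0 = (- lam) * HH1 (-1) lam x y p q"
  "cybe (-1) lam (rr (-1) lam x y p q) 2 1 1 = 0"
  "cybe (-1) lam (rr (-1) lam x y p q) 2 1 2 = 0"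
  "cybe (-1) lam (rr (-1) lam x y p q) 2 1 3 = (- 2 * lam) * HH2 (-1) x y p q"
  "cybe (-1) lam (rr (-1) lam x y p q) 2 1 4 = 0"
  "cybe (-1) lam (rr (-1) lam x y p q) 2 1 5 = 0"
  "cybe (-1) lam (rr (-1) lam x y p q) 2 2 0 = 0"
  "cybe (-1) lam (rr (-1) lam x y p q) 2 2 1 = 0"
  "cybe (-1) lam (rr (-1) lam x y p q) 2 2 2 = 0"
  "cybe (-1) lam (rr (-1) lam x y p q) 2 2 3 = 0"
  "cybe (-1) lam (rr (-1) lam x y p q) 2 2 4 = 0"
  "cybe (-1) lam (rr (-1) lam x y p q) 2 2 5 = 0"
  "cybe (-1) lam (rr (-1) lam x y p q) 2 3 0 = 0"
  "cybe (-1) lam (rr (-1) lam x y p q) 2 3 1 = (2 * lam) * HH2 (-1) x y p q"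
  "cybe (-1) lam (rr (-1) lam x y p q) 2 3 2 = 0"
  "cybe (-1) lam (rr (-1) lam x y p q) 2 3 3 = 0"
  "cybe (-1) lam (rr (-1) lam x y p q) 2 3 4 = (1) * HH1 (-1) lam x y p q"
  "cybe (-1) lam (rr (-1) lam x y p q) 2 3 5 = 0"
  "cybe (-1) lam (rr (-1) lam x y p q) 2 4 0 = (- 2 * lam) * HH2 (-1) x y p q"
  "cybe (-1) lam (rr (-1) lam x y p q) 2 4 1 = 0"
  "cybe (-1) lam (rr (-1) lam x y p q) 2 4 2 = 0"
  "cybe (-1) lam (rr (-1) lam x y p q) 2 4 3 = (- 1) * HH1 (-1) lam x y p q"
  "cybe (-1) lam (rr (-1) lam x y p q) 2 4 4 = 0"
  "cybe (-1) lam (rr (-1) lam x y p q) 2 4 5 = 0"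
  "cybe (-1) lam (rr (-1) lam x y p q) 2 5 0 = 0"
  "cybe (-1) lam (rr (-1) lam x y p q) 2 5 1 = 0"
  "cybe (-1) lam (rr (-1) lam x y p q) 2 5 2 = 0"
  "cybe (-1) lam (rr (-1) lam x y p q) 2 5 3 = 0"
  "cybe (-1) lam (rr (-1) lam x y p q) 2 5 4 = 0"
  "cybe (-1) lam (rr (-1) lam x y p q) 2 5 5 = 0"
  "cybe (-1) lam (rr (-1) lam x y p q) 3 0 0 = 0"
  "cybe (-1) lam (rr (-1) lam x y p q) 3 0 1 = 0"
  "cybe (-1) lam (rr (-1) lam x y p q) 3 0 2 = 0"
  "cybe (-1) lam (rr (-1) lam x y p q) 3 0 3 = 0"
  "cybe (-1) lam (rr (-1) lam x y p q) 3 0 4 = 0"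
  "cybe (-1) lam (rr (-1) lam x y p q) 3 0 5 = 0"
  "cybe (-1) lam (rr (-1) lam x y p q) 3 1 0 = 0"
  "cybe (-1) lam (rr (-1) lam x y p q) 3 1 1 = 0"
  "cybe (-1) lam (rr (-1) lam x y p q) 3 1 2 = (2 * lam) * HH2 (-1) x y p q"
  "cybe (-1) lam (rr (-1) lam x y p q) 3 1 3 = 0"
  "cybe (-1) lam (rr (-1) lam x y p q) 3 1 4 = 0"
  "cybe (-1) lam (rr (-1) lam x y p q) 3 1 5 = (1) * HH1 (-1) lam x y p q"
  "cybe (-1) lam (rr (-1) lam x y p q) 3 2 0 = 0"
  "cybe (-1) lam (rr (-1) lam x y p q) 3 2 1 = (- 2 * lam) * HH2 (-1) x y p q"
  "cybe (-1) lam (rr (-1) lam x y p q) 3 2 2 = 0"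
  "cybe (-1) lam (rr (-1) lam x y p q) 3 2 3 = 0"
  "cybe (-1) lam (rr (-1) lam x y p q) 3 2 4 = (- 1) * HH1 (-1) lam x y p q"
  "cybe (-1) lam (rr (-1) lam x y p q) 3 2 5 = 0"
  "cybe (-1) lam (rr (-1) lam x y p q) 3 3 0 = 0"
  "cybe (-1) lam (rr (-1) lam x y p q) 3 3 1 = 0"
  "cybe (-1) lam (rr (-1) lam x y p q) 3 3 2 = 0"
  "cybe (-1) lam (rr (-1) lam x y p q) 3 3 3 = 0"
  "cybe (-1) lam (rr (-1) lam x y p q) 3 3 4 = 0"
  "cybe (-1) lam (rr (-1) lam x y p q) 3 3 5 = 0"
  "cybe (-1) lam (rr (-1) lam x y p q) 3 4 0 = 0"
  "cybe (-1) lam (rr (-1) lam x y p q) 3 4 1 = 0"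
  "cybe (-1) lam (rr (-1) lam x y p q) 3 4 2 = (1) * HH1 (-1) lam x y p q"
  "cybe (-1) lam (rr (-1) lam x y p q) 3 4 3 = 0"
  "cybe (-1) lam (rr (-1) lam x y p q) 3 4 4 = 0"
  "cybe (-1) lam (rr (-1) lam x y p q) 3 4 5 = (2) * HH2 (-1) x y p q"
  "cybe (-1) lam (rr (-1) lam x y p q) 3 5 0 = 0"
  "cybe (-1) lam (rr (-1) lam x y p q) 3 5 1 = (- 1) * HH1 (-1) lam x y p q"
  "cybe (-1) lam (rr (-1) lam x y p q) 3 5 2 = 0"
  "cybe (-1) lam (rr (-1) lam x y p q) 3 5 3 = 0"
  "cybe (-1) lam (rr (-1) lam x y p q) 3 5 4 = (- 2) * HH2 (-1) x y p q"
  "cybe (-1) lam (rr (-1) lam x y p q) 3 5 5 = 0"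
  "cybe (-1) lam (rr (-1) lam x y p q) 4 0 0 = 0"
  "cybe (-1) lam (rr (-1) lam x y p q) 4 0 1 = 0"
  "cybe (-1) lam (rr (-1) lam x y p q) 4 0 2 = (- 2 * lam) * HH2 (-1) x y p q"
  "cybe (-1) lam (rr (-1) lam x y p q) 4 0 3 = 0"
  "cybe (-1) lam (rr (-1) lam x y p q) 4 0 4 = 0"
  "cybe (-1) lam (rr (-1) lam x y p q) 4 0 5 = (- 1) * HH1 (-1) lam x y p q"
  "cybe (-1) lam (rr (-1) lam x y p q) 4 1 0 = 0"
  "cybe (-1) lam (rr (-1) lam x y p q) 4 1 1 = 0"
  "cybe (-1) lam (rr (-1) lam x y p q) 4 1 2 = 0"
  "cybe (-1) lam (rr (-1) lam x y p q) 4 1 3 = 0"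
  "cybe (-1) lam (rr (-1) lam x y p q) 4 1 4 = 0"
  "cybe (-1) lam (rr (-1) lam x y p q) 4 1 5 = 0"
  "cybe (-1) lam (rr (-1) lam x y p q) 4 2 0 = (2 * lam) * HH2 (-1) x y p q"
  "cybe (-1) lam (rr (-1) lam x y p q) 4 2 1 = 0"
  "cybe (-1) lam (rr (-1) lam x y p q) 4 2 2 = 0"
  "cybe (-1) lam (rr (-1) lam x y p q) 4 2 3 = (1) * HH1 (-1) lam x y p q"
  "cybe (-1) lam (rr (-1) lam x y p q) 4 2 4 = 0"
  "cybe (-1) lam (rr (-1) lam x y p q) 4 2 5 = 0"
  "cybe (-1) lam (rr (-1) lam x y p q) 4 3 0 = 0"
  "cybe (-1) lam (rr (-1) lam x y p q) 4 3 1 = 0"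
  "cybe (-1) lam (rr (-1) lam x y p q) 4 3 2 = (- 1) * HH1 (-1) lam x y p q"
  "cybe (-1) lam (rr (-1) lam x y p q) 4 3 3 = 0"
  "cybe (-1) lam (rr (-1) lam x y p q) 4 3 4 = 0"
  "cybe (-1) lam (rr (-1) lam x y p q) 4 3 5 = (- 2) * HH2 (-1) x y p q"
  "cybe (-1) lam (rr (-1) lam x y p q) 4 4 0 = 0"
  "cybe (-1) lam (rr (-1) lam x y p q) 4 4 1 = 0"
  "cybe (-1) lam (rr (-1) lam x y p q) 4 4 2 = 0"
  "cybe (-1) lam (rr (-1) lam x y p q) 4 4 3 = 0"
  "cybe (-1) lam (rr (-1) lam x y p q) 4 4 4 = 0"
  "cybe (-1) lam (rr (-1) lam x y p q) 4 4 5 = 0"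
  "cybe (-1) lam (rr (-1) lam x y p q) 4 5 0 = (1) * HH1 (-1) lam x y p q"
  "cybe (-1) lam (rr (-1) lam x y p q) 4 5 1 = 0"
  "cybe (-1) lam (rr (-1) lam x y p q) 4 5 2 = 0"
  "cybe (-1) lam (rr (-1) lam x y p q) 4 5 3 = (2) * HH2 (-1) x y p q"
  "cybe (-1) lam (rr (-1) lam x y p q) 4 5 4 = 0"
  "cybe (-1) lam (rr (-1) lam x y p q) 4 5 5 = 0"
  "cybe (-1) lam (rr (-1) lam x y p q) 5 0 0 = 0"
  "cybe (-1) lam (rr (-1) lam x y p q) 5 0 1 = (2 * lam) * HH2 (-1) x y p q"
  "cybe (-1) lam (rr (-1) lam x y p q) 5 0 2 = 0"
  "cybe (-1) lam (rr (-1) lam x y p q) 5 0 3 = 0"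
  "cybe (-1) lam (rr (-1) lam x y p q) 5 0 4 = (1) * HH1 (-1) lam x y p q"
  "cybe (-1) lam (rr (-1) lam x y p q) 5 0 5 = 0"
  "cybe (-1) lam (rr (-1) lam x y p q) 5 1 0 = (- 2 * lam) * HH2 (-1) x y p q"
  "cybe (-1) lam (rr (-1) lam x y p q) 5 1 1 = 0"
  "cybe (-1) lam (rr (-1) lam x y p q) 5 1 2 = 0"
  "cybe (-1) lam (rr (-1) lam x y p q) 5 1 3 = (- 1) * HH1 (-1) lam x y p q"
  "cybe (-1) lam (rr (-1) lam x y p q) 5 1 4 = 0"
  "cybe (-1) lam (rr (-1) lam x y p q) 5 1 5 = 0"
  "cybe (-1) lam (rr (-1) lam x y p q) 5 2 0 = 0"
  "cybe (-1) lam (rr (-1) lam x y p q) 5 2 1 = 0"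
  "cybe (-1) lam (rr (-1) lam x y p q) 5 2 2 = 0"
  "cybe (-1) lam (rr (-1) lam x y p q) 5 2 3 = 0"
  "cybe (-1) lam (rr (-1) lam x y p q) 5 2 4 = 0"
  "cybe (-1) lam (rr (-1) lam x y p q) 5 2 5 = 0"
  "cybe (-1) lam (rr (-1) lam x y p q) 5 3 0 = 0"
  "cybe (-1) lam (rr (-1) lam x y p q) 5 3 1 = (1) * HH1 (-1) lam x y p q"
  "cybe (-1) lam (rr (-1) lam x y p q) 5 3 2 = 0"
  "cybe (-1) lam (rr (-1) lam x y p q) 5 3 3 = 0"
  "cybe (-1) lam (rr (-1) lam x y p q) 5 3 4 = (2) * HH2 (-1) x y p q"
  "cybe (-1) lam (rr (-1) lam x y p q) 5 3 5 = 0"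
  "cybe (-1) lam (rr (-1) lam x y p q) 5 4 0 = (- 1) * HH1 (-1) lam x y p q"
  "cybe (-1) lam (rr (-1) lam x y p q) 5 4 1 = 0"
  "cybe (-1) lam (rr (-1) lam x y p q) 5 4 2 = 0"
  "cybe (-1) lam (rr (-1) lam x y p q) 5 4 3 = (- 2) * HH2 (-1) x y p q"
  "cybe (-1) lam (rr (-1) lam x y p q) 5 4 4 = 0"
  "cybe (-1) lam (rr (-1) lam x y p q) 5 4 5 = 0"
  "cybe (-1) lam (rr (-1) lam x y p q) 5 5 0 = 0"
  "cybe (-1) lam (rr (-1) lam x y p q) 5 5 1 = 0"
  "cybe (-1) lam (rr (-1) lam x y p q) 5 5 2 = 0"
  "cybe (-1) lam (rr (-1) lam x y p q) 5 5 3 = 0"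
  "cybe (-1) lam (rr (-1) lam x y p q) 5 5 4 = 0"
  "cybe (-1) lam (rr (-1) lam x y p q) 5 5 5 = 0"
  by (simp add: cybe_def sum6 rrtab brtab HH1_def HH2_def; algebra)+

lemma lt6: "(i::nat) < 6 \<longleftrightarrow> i = 0 \<or> i = 1 \<or> i = 2 \<or> i = 3 \<or> i = 4 \<or> i = 5" by auto

lemma cyb_all1: assumes "HH1 1 lam x y p q = 0" "HH2 1 x y p q = 0" "a < 6" "b < 6" "c < 6"
  shows "cybe 1 lam (rr 1 lam x y p q) a b c = 0"
proof -
  note Z = cyb_p[of lam x y p q, unfolded assms(1,2) mult_zero_right add_0_right]
  show ?thesis using assms(3-5) unfolding lt6 by (elim disjE) (simp_all only: Z)
qed

lemma cyb_allm: assumes "HH1 (-1) lam x y p q = 0" "HH2 (-1) x y p q = 0" "a < 6" "b < 6" "c < 6"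
  shows "cybe (-1) lam (rr (-1) lam x y p q) a b c = 0"
proof -
  note Z = cyb_m[of lam x y p q, unfolded assms(1,2) mult_zero_right add_0_right]
  show ?thesis using assms(3-5) unfolding lt6 by (elim disjE) (simp_all only: Z)
qed

lemma cyb_all: assumes "s = 1 \<or> s = -1" "HH1 s lam x y p q = 0" "HH2 s x y p q = 0" "a < 6" "b < 6" "c < 6"
  shows "cybe s lam (rr s lam x y p q) a b c = 0"
  using assms(1)
proof
  assume "s = 1" then show ?thesis using cyb_all1 assms(2-6) by blast
next
  assume "s = -1" then show ?thesis using cyb_allm assms(2-6) by blast
qed

lemma r_rr: assumes "i < 6" "j < 6"
  shows "r_pq s lam \<alpha> \<beta> p q i j = rr s lam (\<alpha> / ttb lam \<alpha> \<beta>) (\<beta> / ttb lam \<alpha> \<beta>) p q i j"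
  using assms unfolding lt6
  by (elim disjE; simp add: U rr_def sum3 algebra_simps)

lemma cybe_cong: assumes "\<And>i j. i < 6 \<Longrightarrow> j < 6 \<Longrightarrow> r i j = r' i j" "a < 6" "b < 6" "c < 6"
  shows "cybe s lam r a b c = cybe s lam r' a b c"
  unfolding cybe_def using assms by (intro arg_cong2[where f="(+)"] sum.cong refl) auto

lemma anti: "(r_pq s lam \<alpha> \<beta> p q - Ktau s lam \<alpha> \<beta>) i j = - (r_pq s lam \<alpha> \<beta> p q - Ktau s lam \<alpha> \<beta>) j i"
  unfolding r_pq_def add_diff_cancel_left'
  by (simp add: sum_fun_apply sum3 tens_def Jv_def Pv_def eps_def low_def eta_def)

theorem mainTheorem3:
  fixes s lam \<alpha> \<beta> :: real and p q :: "nat \<Rightarrow> real"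
  assumes "s = 1 \<or> s = -1"
    and "ttb lam \<alpha> \<beta> \<noteq> 0"
    and "etadot s p p + lam * etadot s q q = - mu lam \<alpha> \<beta>"
    and "2 * etadot s p q = - nu lam \<alpha> \<beta>"
  shows "satisfies_CYBE s lam (r_pq s lam \<alpha> \<beta> p q)
       \<and> compatible_r_matrix s lam \<alpha> \<beta> (r_pq s lam \<alpha> \<beta> p q)"
proof -
  define x where "x = \<alpha> / ttb lam \<alpha> \<beta>"
  define y where "y = \<beta> / ttb lam \<alpha> \<beta>"
  have mu: "mu lam \<alpha> \<beta> = x*x + lam*y*y"
    unfolding mu_def x_def y_def using assms(2) by (simp add: power2_eq_square field_simps)
  have nu: "nu lam \<alpha> \<beta> = -2*x*y"
    unfolding nu_def x_def y_def using assms(2) by (simp add: power2_eq_square field_simps)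
  have e: "etadot s u v = u 0 * v 0 + s * u 1 * v 1 + s * u 2 * v 2" for u v
    by (simp add: etadot_def eta_def sum3)
  have "HH1 s lam x y p q = etadot s p p + lam * etadot s q q + mu lam \<alpha> \<beta>"
    by (simp add: HH1_def e mu algebra_simps)
  with assms(3) have H1: "HH1 s lam x y p q = 0" by linarith
  have "2 * HH2 s x y p q = 2 * etadot s p q + nu lam \<alpha> \<beta>"
    by (simp add: HH2_def e nu algebra_simps)
  with assms(4) have H2: "HH2 s x y p q = 0" by linarith
  have C: "satisfies_CYBE s lam (r_pq s lam \<alpha> \<beta> p q)"
    unfolding satisfies_CYBE_def
  proof (intro allI impI)
    fix a b c :: nat assume abc: "a < 6" "b < 6" "c < 6"
    have "cybe s lam (r_pq s lam \<alpha> \<beta> p q) a b c = cybe s lam (rr s lam x y p q) a b c"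
      using abc by (intro cybe_cong) (simp_all add: r_rr x_def y_def)
    also have "\<dots> = 0" using cyb_all[OF assms(1) H1 H2 abc] .
    finally show "cybe s lam (r_pq s lam \<alpha> \<beta> p q) a b c = 0" .
  qed
  let ?r' = "r_pq s lam \<alpha> \<beta> p q - Ktau s lam \<alpha> \<beta>"
  have a1: "\<forall>i j. ?r' i j = - ?r' j i" using anti by blast
  have a2: "r_pq s lam \<alpha> \<beta> p q = ?r' + Ktau s lam \<alpha> \<beta>" by simp
  from a1 a2 have "\<exists>r'. (\<forall>i j. r' i j = - r' j i) \<and> r_pq s lam \<alpha> \<beta> p q = r' + Ktau s lam \<alpha> \<beta>" by blast
  with C show ?thesis unfolding compatible_r_matrix_def by blast
qed
end
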